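(* Let $Q(x,y)=Q(q,\nu,t,1,1;x,y)$, $Q_1(x)=[y^1]Q(x,y)$, and define $$K(x,y)=1-xt-\frac ty-\frac{yt(\nu-1)}{(1-x\nu t)x}-\frac{ty^2(\nu-1+q-x\nu qt)Q(0,y)}{1-x\nu t}-\frac{y(\nu+x\nu t-1)Q_1(x)}{\nu}$$ (this is the coefficient of $Q(x,y)$ when the functional equation for $Q$ is written as $K(x,y)Q(x,y)=R(x,y)$). Set $x=ts$ with $s$ an indeterminate. Then, as a function of $y$, $K(ts,y)$ has exactly two roots $Y_1,Y_2$ in $\mathbb{Q}(q,\nu,s)[[t]]$, with constant terms $0$ and $\frac{s}{\nu-1}$ respectively; both actually belong to $\mathbb{Q}(\nu)[q,s,1/s][[t]]$.
   Context: Planar maps are connected planar graphs properly embedded in the oriented sphere up to orientation-preserving homeomorphism (loops and multiple edges allowed), rooted by a distinguished corner whose vertex/face are the root-vertex/root-face (other faces are internal); degrees count edges with multiplicity; the atomic map is included; $e,v,f$ count edges, vertices, faces; $d_f$ is the root-face degree. The Potts polynomial is $P_G(q,\nu)=\sum_{c:V(G)\to\{1,\dots,q\}}\nu^{m(c)}$, $m(c)$ = number of monochromatic edges (loops always monochromatic), viewed as a polynomial in $q,\nu$. A quasi-triangulation is a rooted planar map whose internal faces are digons incident to the root-vertex or triangles; $\mathrm{dig}(Q)$ = number of internal digons, $\mathrm{ddig}(Q)$ = number of internal digons doubly incident to the root-vertex. $Q(q,\nu,t,w,z;x,y)=\frac1q\sum_Q t^{e(Q)}w^{v(Q)-1}z^{f(Q)-1}x^{\mathrm{dig}(Q)}y^{d_f(Q)}2^{\mathrm{ddig}(Q)}P_Q(q,\nu)$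 over all quasi-triangulations. *)

theory Defs
  imports "HOL-Computational_Algebra.Computational_Algebra"
          "HOL-Combinatorics.Permutations" "HOL-Library.FuncSet"
begin

text \<open>F = Q(q,nu,s), realised as the fraction field of Q[q][nu][s]
  (innermost polynomial variable q, middle nu, outermost s).\<close>

type_synonym F = "rat poly poly poly fract"

definition varq :: F where "varq = Fract [:[:[:0,1:]:]:] 1"
definition varnu :: F where "varnu = Fract [:([:0,1:] :: rat poly poly):] 1"
definition vars :: F where "vars = Fract ([:0,1:] :: rat poly poly poly) 1"

text \<open>The subring Q(nu)[q,s,1/s] of F: elements p(q,nu,s) / (d(nu) s^N), d nonzero.\<close>
definition in_Qnu_q_s_sinv :: "F \<Rightarrow> bool" where
  "in_Qnu_q_s_sinv a \<longleftrightarrow> (\<exists>(p :: rat poly poly poly) (d :: rat poly) (N :: nat).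
      d \<noteq> 0 \<and> a * Fract [:map_poly (\<lambda>c. [:c:]) d:] 1 * vars ^ N = Fract p 1)"

definition potts_eval :: "'v set \<Rightarrow> 'e set \<Rightarrow> ('e \<Rightarrow> 'v \<times> 'v) \<Rightarrow> nat \<Rightarrow> rat \<Rightarrow> rat" where
  "potts_eval V E ends k v =
     (\<Sum>c \<in> V \<rightarrow>\<^sub>E {1..k}. v ^ card {e \<in> E. c (fst (ends e)) = c (snd (ends e))})"

text \<open>Evaluation of p in Q[q][nu] (outer variable nu, inner q) at q = a, nu = b.\<close>
definition eval_qnu :: "rat poly poly \<Rightarrow> rat \<Rightarrow> rat \<Rightarrow> rat" where
  "eval_qnu p a b = poly (map_poly (\<lambda>c. poly c a) p) b"

definition potts_poly :: "'v set \<Rightarrow> 'e set \<Rightarrow> ('e \<Rightarrow> 'v \<times> 'v) \<Rightarrow> rat poly poly" where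
  "potts_poly V E ends =
     (THE p. \<forall>k::nat. k \<ge> 1 \<longrightarrow> (\<forall>v. eval_qnu p (of_nat k) v = potts_eval V E ends k v))"

text \<open>A map with n \<ge> 1 edges on the darts {..<2n}: sigma = vertex rotation,
  alpha = fixed-point-free involution (edges); faces are the cycles of sigma o alpha.
  The root corner is the corner (inv sigma 0, 0): root vertex = sigma-cycle of 0,
  root face = (sigma o alpha)-cycle of 0.\<close>

definition cyc :: "(nat \<Rightarrow> nat) \<Rightarrow> nat \<Rightarrow> nat set" where
  "cyc f d = range (\<lambda>k. (f ^^ k) d)"

definition darts :: "nat \<Rightarrow> nat set" where "darts n = {..<2*n}"

definition map_vertices :: "nat \<Rightarrow> (nat \<Rightarrow> nat) \<Rightarrow> nat set set" where
  "map_vertices n \<sigma> = cyc \<sigma> ` darts n"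

definition map_faces :: "nat \<Rightarrow> (nat \<Rightarrow> nat) \<Rightarrow> (nat \<Rightarrow> nat) \<Rightarrow> nat set set" where
  "map_faces n \<sigma> \<alpha> = cyc (\<sigma> \<circ> \<alpha>) ` darts n"

definition root_vertex :: "(nat \<Rightarrow> nat) \<Rightarrow> nat set" where
  "root_vertex \<sigma> = cyc \<sigma> 0"

definition root_face :: "(nat \<Rightarrow> nat) \<Rightarrow> (nat \<Rightarrow> nat) \<Rightarrow> nat set" where
  "root_face \<sigma> \<alpha> = cyc (\<sigma> \<circ> \<alpha>) 0"

definition internal_faces :: "nat \<Rightarrow> (nat \<Rightarrow> nat) \<Rightarrow> (nat \<Rightarrow> nat) \<Rightarrow> nat set set" where
  "internal_faces n \<sigma> \<alpha> = map_faces n \<sigma> \<alpha> - {root_face \<sigma> \<alpha>}"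

definition is_planar_map :: "nat \<Rightarrow> (nat \<Rightarrow> nat) \<Rightarrow> (nat \<Rightarrow> nat) \<Rightarrow> bool" where
  "is_planar_map n \<sigma> \<alpha> \<longleftrightarrow>
     \<sigma> permutes darts n \<and> \<alpha> permutes darts n \<and>
     (\<forall>d \<in> darts n. \<alpha> d \<noteq> d \<and> \<alpha> (\<alpha> d) = d) \<and>
     (\<forall>d \<in> darts n. (0, d) \<in> ({(a, \<sigma> a) | a. a \<in> darts n} \<union> {(a, \<alpha> a) | a. a \<in> darts n})\<^sup>*) \<and>
     card (map_vertices n \<sigma>) + card (map_faces n \<sigma> \<alpha>) = n + 2"

definition is_quasi_tri :: "nat \<Rightarrow> (nat \<Rightarrow> nat) \<Rightarrow> (nat \<Rightarrow> nat) \<Rightarrow> bool" where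
  "is_quasi_tri n \<sigma> \<alpha> \<longleftrightarrow> is_planar_map n \<sigma> \<alpha> \<and>
     (\<forall>f \<in> internal_faces n \<sigma> \<alpha>.
        card f = 3 \<or> (card f = 2 \<and> f \<inter> root_vertex \<sigma> \<noteq> {}))"

definition n_dig :: "nat \<Rightarrow> (nat \<Rightarrow> nat) \<Rightarrow> (nat \<Rightarrow> nat) \<Rightarrow> nat" where
  "n_dig n \<sigma> \<alpha> = card {f \<in> internal_faces n \<sigma> \<alpha>. card f = 2}"

definition n_ddig :: "nat \<Rightarrow> (nat \<Rightarrow> nat) \<Rightarrow> (nat \<Rightarrow> nat) \<Rightarrow> nat" where
  "n_ddig n \<sigma> \<alpha> = card {f \<in> internal_faces n \<sigma> \<alpha>. card f = 2 \<and> f \<subseteq> root_vertex \<sigma>}"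

definition map_potts :: "nat \<Rightarrow> (nat \<Rightarrow> nat) \<Rightarrow> (nat \<Rightarrow> nat) \<Rightarrow> rat poly poly" where
  "map_potts n \<sigma> \<alpha> = potts_poly (map_vertices n \<sigma>) {d \<in> darts n. d < \<alpha> d}
                                  (\<lambda>d. (cyc \<sigma> d, cyc \<sigma> (\<alpha> d)))"

text \<open>Coefficient of t^n of Q, a polynomial in y (outer) and x (inner) over F.
  Rooted maps with n \<ge> 1 edges are counted as labelled maps on {..<2n} with
  root dart 0, divided by (2n-1)! (each rooted map has exactly (2n-1)! such labellings).
  The only map with 0 edges is the atomic map, contributing (1/q) * q = 1.\<close>
definition Q_coeff :: "nat \<Rightarrow> F poly poly" where
  "Q_coeff n = (if n = 0 then 1 else
     (\<Sum>(\<sigma>, \<alpha>) \<in> {(\<sigma>, \<alpha>). is_quasi_tri n \<sigma> \<alpha>}.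
        monom (monom (1 / (of_nat (fact (2*n - 1)) * varq) * 2 ^ n_ddig n \<sigma> \<alpha>
                       * Fract [:map_potts n \<sigma> \<alpha>:] 1)
                     (n_dig n \<sigma> \<alpha>))
              (card (root_face \<sigma> \<alpha>))))"

definition Qser :: "F poly poly fps" where "Qser = Abs_fps Q_coeff"

definition Q0y :: "F poly fps" where
  "Q0y = Abs_fps (\<lambda>n. map_poly (\<lambda>p. poly p 0) (fps_nth Qser n))"

definition Q1x :: "F poly fps" where
  "Q1x = Abs_fps (\<lambda>n. coeff (fps_nth Qser n) 1)"

text \<open>Substitution of a power series Y for the polynomial variable of a series
  sum_n t^n p_n(z) with polynomial coefficients: sum_n t^n p_n(Y).\<close>
definition psubst :: "'a::comm_ring_1 poly fps \<Rightarrow> 'a fps \<Rightarrow> 'a fps" where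
  "psubst A Y = Abs_fps (\<lambda>m. \<Sum>n\<le>m. fps_nth (fps_X ^ n * poly (map_poly fps_const (fps_nth A n)) Y) m)"

definition K_ts :: "F fps \<Rightarrow> F fls" where
  "K_ts Y = (let t = fls_X; x = fls_const vars * fls_X; y = fps_to_fls Y;
                 q = fls_const varq; \<nu> = fls_const varnu;
                 Q0 = fps_to_fls (psubst Q0y Y);
                 Q1 = fps_to_fls (psubst Q1x (fps_const vars * fps_X))
             in 1 - x * t - t / y - y * t * (\<nu> - 1) / ((1 - x * \<nu> * t) * x)
                - t * y^2 * (\<nu> - 1 + q - x * \<nu> * q * t) * Q0 / (1 - x * \<nu> * t)
                - y * (\<nu> + x * \<nu> * t - 1) * Q1 / \<nu>)"

end

theory Submission
  imports Defs
begin


lemma vars_nz: "vars \<noteq> 0" by (simp add: vars_def Zero_fract_def eq_fract)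
lemma varnu_nz: "varnu \<noteq> 0" by (simp add: varnu_def Zero_fract_def eq_fract)
lemma varq_nz: "varq \<noteq> 0" by (simp add: varq_def Zero_fract_def eq_fract)
lemma varnu_ne1: "varnu \<noteq> 1"
  by (simp add: varnu_def One_fract_def eq_fract one_pCons)

definition Dd :: "F fps" where "Dd = 1 - fps_const vars * fps_X * fps_const varnu * fps_X"
definition Q1s :: "F fps" where "Q1s = psubst Q1x (fps_const vars * fps_X)"

definition G :: "F fps \<Rightarrow> F fps" where
 "G Y = Y * (1 - fps_const vars * fps_X * fps_X) * Dd - fps_X * Dd
        - Y^2 * (fps_const varnu - 1) * fps_const (1/vars)
        - fps_X * Y^3 * (fps_const varnu - 1 + fps_const varq - fps_const vars * fps_X * fps_const varnu * fps_const varq * fps_X) * psubst Q0y Y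
        - Y * Y * (fps_const varnu + fps_const vars * fps_X * fps_const varnu * fps_X - 1) * Dd * Q1s * fps_const (1/varnu)"

lemma field_ident:
  fixes t S N Qc y P0 P1 :: "'a::field"
  assumes "S \<noteq> 0" "t \<noteq> 0" "N \<noteq> 0" "y \<noteq> 0" "1 - S * t * N * t \<noteq> 0"
  shows "(1 - S * t * t - t / y - y * t * (N - 1) / ((1 - S * t * N * t) * (S * t))
           - t * y^2 * (N - 1 + Qc - S * t * N * Qc * t) * P0 / (1 - S * t * N * t)
           - y * (N + S * t * N * t - 1) * P1 / N) * y * (1 - S * t * N * t)
       = y * (1 - S * t * t) * (1 - S * t * N * t) - t * (1 - S * t * N * t)
         - y^2 * ((N - 1) * (1/S))
         - t * y^3 * (N - 1 + Qc - S * t * N * Qc * t) * P0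
         - y * y * (N + S * t * N * t - 1) * (1 - S * t * N * t) * P1 * (1/N)"
proof -
  define E where "E = 1 - S * t * N * t"
  have E: "E \<noteq> 0" using assms(5) E_def by simp
  have "(1 - S * t * t - t / y - y * t * (N - 1) / (E * (S * t))
           - t * y^2 * (N - 1 + Qc - S * t * N * Qc * t) * P0 / E
           - y * (N + S * t * N * t - 1) * P1 / N) * y * E
       = y * (1 - S * t * t) * E - t * E
         - y^2 * ((N - 1) * (1/S))
         - t * y^3 * (N - 1 + Qc - S * t * N * Qc * t) * P0
         - y * y * (N + S * t * N * t - 1) * E * P1 * (1/N)"
    using assms(1-4) E by (simp add: field_simps power2_eq_square power3_eq_cube)
  thus ?thesis unfolding E_def .
qed

lemma K_G:
  assumes "Y \<noteq> 0"
  shows "K_ts Y * fps_to_fls Y * fps_to_fls Dd = fps_to_fls (G Y)"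
proof -
  have s: "fls_const vars \<noteq> (0::F fls)" using vars_nz by simp
  have n: "fls_const varnu \<noteq> (0::F fls)" using varnu_nz by simp
  have y: "fps_to_fls Y \<noteq> 0" using assms by simp
  have D: "1 - fls_const vars * fls_X * fls_const varnu * fls_X \<noteq> (0::F fls)"
  proof
    assume "1 - fls_const vars * fls_X * fls_const varnu * fls_X = (0::F fls)"
    hence "fls_nth (1 - fls_const vars * fls_X * fls_const varnu * fls_X) 0 = 0" by simp
    thus False by (simp add: fls_times_nth)
  qed
  have c1: "fls_const (1/varnu) = 1 / fls_const varnu" by (metis fls_const_divide_const fls_const_1)
  have c2: "fls_const (1/vars) = 1 / fls_const vars" by (metis fls_const_divide_const fls_const_1)
  have e: "fps_to_fls Dd = 1 - fls_const vars * fls_X * fls_const varnu * fls_X"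
    by (simp add: Dd_def fls_times_fps_to_fls)
  show ?thesis
    unfolding K_ts_def Let_def e
    apply (subst field_ident[OF s fls_X_nonzero n y D])
    apply (simp add: G_def Dd_def Q1s_def fls_times_fps_to_fls fps_to_fls_power c1 c2 del: fls_const_mult_const)
    done
qed
lemma mult_low:
  fixes W V :: "'a::comm_ring_1 fps"
  assumes "\<And>i. i < m \<Longrightarrow> W $ i = 0"
  shows "(W * V) $ m = W $ m * V $ 0"
proof -
  have "(W * V) $ m = (\<Sum>i=0..m. W$i * V$(m - i))" by (rule fps_mult_nth)
  also have "\<dots> = (\<Sum>i\<in>{m}. W$i * V$(m - i))"
    by (rule sum.mono_neutral_right) (auto simp: assms)
  finally show ?thesis by simp
qed

definition agree :: "nat \<Rightarrow> 'a fps \<Rightarrow> 'a fps \<Rightarrow> bool" where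
  "agree n A B \<longleftrightarrow> (\<forall>i\<le>n. A $ i = B $ i)"

lemma agree_refl[simp]: "agree n A A" by (simp add: agree_def)

lemma agree_add: "agree n A B \<Longrightarrow> agree n C D \<Longrightarrow> agree n (A + C) (B + D)"
  by (simp add: agree_def)
lemma agree_diff: "agree n A B \<Longrightarrow> agree n C D \<Longrightarrow> agree n (A - C) (B - (D::'a::ab_group_add fps))"
  by (simp add: agree_def)
lemma agree_mult:
  fixes A B C D :: "'a::comm_ring_1 fps"
  shows "agree n A B \<Longrightarrow> agree n C D \<Longrightarrow> agree n (A * C) (B * D)"
  unfolding agree_def fps_mult_nth by (auto intro!: sum.cong)
lemma agree_pow:
  fixes A B :: "'a::comm_ring_1 fps"
  shows "agree n A B \<Longrightarrow> agree n (A ^ k) (B ^ k)"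
  by (induction k) (auto intro: agree_mult)
lemma agree_poly:
  fixes A B :: "'a::comm_ring_1 fps"
  shows "agree n A B \<Longrightarrow> agree n (poly (map_poly fps_const p) A) (poly (map_poly fps_const p) B)"
  by (induction p) (auto simp: map_poly_pCons intro!: agree_add agree_mult)
lemma agree_mono: "agree n A B \<Longrightarrow> m \<le> n \<Longrightarrow> agree m A B"
  by (simp add: agree_def)
lemma agree_psubst:
  fixes Y Z :: "'a::comm_ring_1 fps"
  assumes "agree n Y Z" shows "agree n (psubst P Y) (psubst P Z)"
  unfolding agree_def psubst_def fps_X_power_mult_nth
proof (intro allI impI)
  fix i assume i: "i \<le> n"
  show "Abs_fps (\<lambda>m. \<Sum>k\<le>m. if m < k then 0 else poly (map_poly fps_const (P $ k)) Y $ (m - k)) $ i =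
    Abs_fps (\<lambda>m. \<Sum>k\<le>m. if m < k then 0 else poly (map_poly fps_const (P $ k)) Z $ (m - k)) $ i"
    using agree_poly[OF assms, of "P $ _"] i by (auto simp: agree_def intro!: sum.cong)
qed

lemma agree_G: "agree n Y Z \<Longrightarrow> agree n (G Y) (G Z)"
  unfolding G_def by (intro agree_diff agree_mult agree_pow agree_psubst agree_refl) auto

lemma agree_X: fixes A B :: "'a::comm_ring_1 fps" shows "1 \<le> m \<Longrightarrow> agree (m - 1) A B \<Longrightarrow> (fps_X * A) $ m = (fps_X * B) $ m"
  by (simp add: agree_def fps_X_mult_nth)

lemma Q1s_0: "Q1s $ 0 = 0"
  by (simp add: Q1s_def psubst_def Q1x_def Qser_def Q_coeff_def)

lemma G_0: "G Y $ 0 = Y $ 0 - (Y $ 0)^2 * ((varnu - 1) / vars)"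
  by (simp add: G_def Dd_def Q1s_0 fps_nth_power_0)

definition Tm :: "F fps \<Rightarrow> F fps" where
  "Tm Y = Y^3 * (fps_const varnu - 1 + fps_const varq - fps_const vars * fps_X * fps_const varnu * fps_const varq * fps_X) * psubst Q0y Y"
definition Cc :: "F fps" where
  "Cc = (fps_const varnu + fps_const vars * fps_X * fps_const varnu * fps_X - 1) * Dd * Q1s * fps_const (1/varnu)"
definition E1 :: "F fps" where "E1 = (1 - fps_const vars * fps_X * fps_X) * Dd"

lemma G_alt: "G Y = Y * E1 - fps_X * Dd - Y^2 * ((fps_const varnu - 1) * fps_const (1/vars)) - fps_X * Tm Y - Y * Y * Cc"
  unfolding G_def Tm_def Cc_def E1_def by (simp add: algebra_simps power2_eq_square del: fps_const_mult fps_const_add fps_const_sub fps_const_neg)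

lemma G_diff:
  assumes m: "1 \<le> m" and agr: "\<And>i. i < m \<Longrightarrow> Y $ i = Z $ i"
  shows "G Y $ m - G Z $ m = (Y $ m - Z $ m) * (1 - 2 * Y $ 0 * ((varnu - 1) / vars))"
proof -
  define a where "a = (fps_const varnu - 1) * fps_const (1/vars)"
  have eq: "G Y - G Z = (Y - Z) * (E1 - (Y + Z) * a - (Y + Z) * Cc) - (fps_X * Tm Y - fps_X * Tm Z)"
    unfolding G_alt a_def by (simp add: algebra_simps power2_eq_square)
  have W: "\<And>i. i < m \<Longrightarrow> (Y - Z) $ i = 0" using agr by simp
  have "agree (m - 1) Y Z" using agr m by (auto simp: agree_def)
  hence "agree (m - 1) (Tm Y) (Tm Z)" unfolding Tm_def
    by (intro agree_mult agree_pow agree_psubst agree_refl)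
  hence X: "(fps_X * Tm Y) $ m = (fps_X * Tm Z) $ m" by (rule agree_X[OF m])
  have z: "Z $ 0 = Y $ 0" using agr[of 0] m by simp
  have "(G Y - G Z) $ m = (Y - Z) $ m * (E1 - (Y + Z) * a - (Y + Z) * Cc) $ 0"
    unfolding eq using X mult_low[OF W] by simp
  also have "(E1 - (Y + Z) * a - (Y + Z) * Cc) $ 0 = 1 - 2 * Y $ 0 * ((varnu - 1) / vars)"
    by (simp add: E1_def Dd_def a_def Cc_def Q1s_0 z)
  finally show ?thesis by simp
qed


lemma Fract_eq0: "Fract (a::'a::idom) 1 = 0 \<longleftrightarrow> a = 0"
  using eq_fract(1)[of 1 1 a 0] by (simp add: fract_collapse)

abbreviation R where "R \<equiv> in_Qnu_q_s_sinv"

definition liftc :: "rat poly \<Rightarrow> rat poly poly" where "liftc d = map_poly (\<lambda>c. [:c:]) d"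
definition emb :: "rat poly \<Rightarrow> F" where "emb d = Fract [:liftc d:] 1"

lemma liftc_add: "liftc (p + q) = liftc p + liftc q"
  unfolding liftc_def by (intro poly_eqI) (simp add: coeff_map_poly)
lemma liftc_smult: "liftc (smult a q) = smult [:a:] (liftc q)"
  unfolding liftc_def by (rule map_poly_smult) auto
lemma liftc_pCons: "liftc (pCons a p) = pCons [:a:] (liftc p)"
  unfolding liftc_def by (rule map_poly_pCons) auto
lemma liftc_mult: "liftc (p * q) = liftc p * liftc q"
proof (induction p)
  case 0 then show ?case by (simp add: liftc_def)
next
  case (pCons a p)
  have "liftc (pCons a p * q) = liftc (smult a q + pCons 0 (p * q))" by simp
  also have "\<dots> = smult [:a:] (liftc q) + pCons 0 (liftc p * liftc q)"
    by (simp add: liftc_add liftc_smult liftc_pCons[of 0, simplified] pCons.IH)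
  also have "\<dots> = liftc (pCons a p) * liftc q" by (simp add: liftc_pCons)
  finally show ?case .
qed
lemma liftc_eq0: "liftc d = 0 \<longleftrightarrow> d = 0"
  unfolding liftc_def by (subst map_poly_eq_0_iff) auto
lemma liftc_1: "liftc 1 = 1" unfolding liftc_def by simp

lemma emb_mult: "emb (p * q) = emb p * emb q"
  by (simp add: emb_def liftc_mult ac_simps)
lemma emb_nz: "d \<noteq> 0 \<Longrightarrow> emb d \<noteq> 0"
  by (simp add: emb_def Fract_eq0 liftc_eq0)
lemma emb_1: "emb 1 = 1" by (simp add: emb_def liftc_1 fract_collapse one_pCons[symmetric])
lemma vars_pow: "vars ^ N = Fract ([:0,1:] ^ N) 1"
  by (induction N) (simp_all add: vars_def fract_collapse)

lemma R_iff: "R a \<longleftrightarrow> (\<exists>p d N. d \<noteq> 0 \<and> a * emb d * vars ^ N = Fract p 1)"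
  unfolding in_Qnu_q_s_sinv_def emb_def liftc_def by simp

lemma emb_pow: "\<exists>p. emb d * vars ^ N = Fract p 1"
  by (simp add: emb_def vars_pow, blast)

lemma R_Fract: "R (Fract p 1)"
  unfolding R_iff by (rule exI[of _ p], rule exI[of _ 1], rule exI[of _ 0]) (simp add: emb_1)

lemma R_0: "R 0" using R_Fract[of 0] by (simp add: fract_collapse)
lemma R_1: "R 1" using R_Fract[of 1] by (simp add: fract_collapse)

lemma R_mult: assumes "R a" "R b" shows "R (a * b)"
proof -
  obtain p1 d1 N1 where 1: "d1 \<noteq> 0" "a * emb d1 * vars ^ N1 = Fract p1 1" using assms(1) R_iff by blast
  obtain p2 d2 N2 where 2: "d2 \<noteq> 0" "b * emb d2 * vars ^ N2 = Fract p2 1" using assms(2) R_iff by blast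
  have "(a * b) * emb (d1 * d2) * vars ^ (N1 + N2) = (a * emb d1 * vars ^ N1) * (b * emb d2 * vars ^ N2)"
    unfolding emb_mult power_add by (simp only: mult_ac)
  also have "\<dots> = Fract (p1 * p2) 1" using 1 2 by simp
  finally have "(a * b) * emb (d1 * d2) * vars ^ (N1 + N2) = Fract (p1 * p2) 1" .
  moreover have "d1 * d2 \<noteq> 0" using 1 2 by simp
  ultimately show ?thesis unfolding R_iff by blast
qed

lemma R_add: assumes "R a" "R b" shows "R (a + b)"
proof -
  obtain p1 d1 N1 where 1: "d1 \<noteq> 0" "a * emb d1 * vars ^ N1 = Fract p1 1" using assms(1) R_iff by blast
  obtain p2 d2 N2 where 2: "d2 \<noteq> 0" "b * emb d2 * vars ^ N2 = Fract p2 1" using assms(2) R_iff by blast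
  obtain e1 where e1: "emb d1 * vars ^ N1 = Fract e1 1" using emb_pow by blast
  obtain e2 where e2: "emb d2 * vars ^ N2 = Fract e2 1" using emb_pow by blast
  have "(a + b) * emb (d1 * d2) * vars ^ (N1 + N2) =
        (a * emb d1 * vars ^ N1) * (emb d2 * vars ^ N2) + (b * emb d2 * vars ^ N2) * (emb d1 * vars ^ N1)"
    unfolding emb_mult power_add by (simp add: algebra_simps)
  also have "\<dots> = Fract (p1 * e2 + p2 * e1) 1" using 1 2 e1 e2 by simp
  finally have "(a + b) * emb (d1 * d2) * vars ^ (N1 + N2) = Fract (p1 * e2 + p2 * e1) 1" .
  moreover have "d1 * d2 \<noteq> 0" using 1 2 by simp
  ultimately show ?thesis unfolding R_iff by blast
qed

lemma R_uminus: "R a \<Longrightarrow> R (- a)"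
proof -
  have "Fract (-1) 1 = - Fract 1 (1::rat poly poly poly)" by simp
  hence "Fract (-1) 1 = (-1::F)" by (simp add: fract_collapse)
  thus "R a \<Longrightarrow> R (- a)" using R_mult[OF R_Fract[of "-1"], of a] by simp
qed
lemma R_diff: assumes "R a" "R b" shows "R (a - b)"
  using R_add[OF assms(1) R_uminus[OF assms(2)]] by simp
lemma R_inv_emb: "d \<noteq> 0 \<Longrightarrow> R (1 / emb d)"
  unfolding R_iff using emb_nz
  by (intro exI[of _ 1] exI[of _ d] exI[of _ 0]) (simp add: fract_collapse)
lemma R_inv_vars: "R (1 / vars)"
  unfolding R_iff using vars_nz
  by (intro exI[of _ 1] exI[of _ 1] exI[of _ 1]) (simp add: fract_collapse emb_1)
lemma R_pow: "R a \<Longrightarrow> R (a ^ n)"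
  by (induction n) (auto intro: R_mult R_1)
lemma R_sum: assumes "\<And>x. x \<in> A \<Longrightarrow> R (f x)" shows "R (sum f A)"
proof (cases "finite A")
  case True
  from True assms show ?thesis
    by (induction A rule: finite_induct) (auto intro: R_0 R_add)
next
  case False thus ?thesis using R_0 by simp
qed
lemma R_of_nat: "R (of_nat n)" using R_Fract[of "of_nat n"] by (simp only: Fract_of_nat_eq)
lemma R_inv_of_nat: "R (1 / of_nat n)"
proof (cases "n = 0")
  case False
  have "liftc [:of_nat n:] = [:[:of_nat n:]:]" using liftc_pCons[of "of_nat n" 0] by (simp add: liftc_def)
  hence "emb [:of_nat n:] = Fract (of_nat n) 1" by (simp add: emb_def of_nat_poly[symmetric])
  hence "emb [:of_nat n:] = of_nat n" by (simp add: Fract_of_nat_eq)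
  then show ?thesis using R_inv_emb[of "[:of_nat n:]"] False by simp
qed (simp add: R_0)
lemma R_vars: "R vars" by (simp add: vars_def R_Fract)
lemma R_varq: "R varq" by (simp add: varq_def R_Fract)
lemma R_varnu: "R varnu" by (simp add: varnu_def R_Fract)
lemma liftc2: "liftc [:a, b:] = [:[:a:], [:b:]:]"
  by (simp add: liftc_pCons) (simp add: liftc_def)
lemma emb_nu: "emb [:0,1:] = varnu"
  unfolding emb_def liftc2 varnu_def by (simp add: one_pCons[symmetric])
lemma emb_nu1: "emb [:-1,1:] = varnu - 1"
proof -
  have "[:[:-1:], [:1:]:] = ([:0,1:] :: rat poly poly) - 1"
    by (simp add: one_pCons[symmetric]) (simp add: one_pCons)
  hence "emb [:-1,1:] = Fract [:[:0,1:] - 1:] 1" by (simp add: emb_def liftc2)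
  also have "\<dots> = Fract [:[:0,1:]:] 1 - Fract 1 1" by (simp add: one_pCons)
  finally show ?thesis by (simp add: varnu_def fract_collapse)
qed
lemma R_inv_nu: "R (1 / varnu)" using R_inv_emb[of "[:0,1:]"] emb_nu by simp
lemma R_inv_nu1: "R (1 / (varnu - 1))" using R_inv_emb[of "[:-1,1:]"] emb_nu1 by simp
lemma R_divide: "R a \<Longrightarrow> R (1 / b) \<Longrightarrow> R (a / b)"
  using R_mult[of a "1/b"] by simp


definition cset :: "'v set \<Rightarrow> ('v \<times> 'v) set \<Rightarrow> nat \<Rightarrow> ('v \<Rightarrow> nat) set" where
  "cset V A k = {c \<in> V \<rightarrow>\<^sub>E {1..k}. \<forall>(u, w) \<in> A. c u = c w}"

lemma count_step:
  assumes V: "u \<in> V" "w \<in> V" "u \<noteq> w" and A: "A \<subseteq> V \<times> V"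
  defines "f \<equiv> id(w := u)"
  shows "card (cset V (insert (u, w) A) k) =
         card (cset (V - {w}) ((\<lambda>(a, b). (f a, f b)) ` A) k)"
proof -
  let ?V' = "V - {w}"
  let ?A' = "(\<lambda>(a, b). (f a, f b)) ` A"
  let ?S = "cset V (insert (u, w) A) k"
  let ?S' = "cset ?V' ?A' k"
  define g where "g c = restrict c ?V'" for c :: "'a \<Rightarrow> nat"
  define h where "h c' = c'(w := c' u)" for c' :: "'a \<Rightarrow> nat"
  have fV: "a \<in> V \<Longrightarrow> f a \<in> ?V'" for a using V by (auto simp: f_def)
  have fc: "c (f a) = c a" if "c u = c w" for c :: "'a \<Rightarrow> nat" and a
    using that by (auto simp: f_def)
  have "bij_betw g ?S ?S'"
  proof (rule bij_betw_byWitness[where f' = h])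
    show "\<forall>c\<in>?S. h (g c) = c"
    proof
      fix c assume c: "c \<in> ?S"
      hence cuw: "c u = c w" and ext: "c \<in> extensional V" by (auto simp: cset_def PiE_iff)
      show "h (g c) = c"
      proof
        fix x show "h (g c) x = c x"
          using V cuw ext by (auto simp: h_def g_def extensional_def)
      qed
    qed
    show "\<forall>c'\<in>?S'. g (h c') = c'"
    proof
      fix c' assume c': "c' \<in> ?S'"
      hence ext: "c' \<in> extensional ?V'" by (auto simp: cset_def PiE_iff)
      show "g (h c') = c'"
      proof
        fix x show "g (h c') x = c' x"
          using ext by (auto simp: h_def g_def extensional_def)
      qed
    qed
    show "g ` ?S \<subseteq> ?S'"
    proof
      fix d assume "d \<in> g ` ?S"
      then obtain c where c: "c \<in> ?S" and d: "d = g c" by blast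
      hence cuw: "c u = c w" and cA: "\<forall>(a, b) \<in> A. c a = c b" and cV: "c \<in> V \<rightarrow>\<^sub>E {1..k}"
        by (auto simp: cset_def)
      have "d \<in> ?V' \<rightarrow>\<^sub>E {1..k}" using cV by (auto simp: d g_def)
      moreover have "\<forall>(a, b) \<in> ?A'. d a = d b"
      proof (clarify)
        fix a b assume ab: "(a, b) \<in> A"
        hence "a \<in> V" "b \<in> V" using A by auto
        hence "d (f a) = c a" "d (f b) = c b" using fV fc[OF cuw] by (auto simp: d g_def)
        thus "d (f a) = d (f b)" using cA ab by auto
      qed
      ultimately show "d \<in> ?S'" by (simp add: cset_def)
    qed
    show "h ` ?S' \<subseteq> ?S"
    proof
      fix d assume "d \<in> h ` ?S'"
      then obtain c' where c': "c' \<in> ?S'" and d: "d = h c'" by blast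
      hence cA: "\<forall>(a, b) \<in> ?A'. c' a = c' b" and cV: "c' \<in> ?V' \<rightarrow>\<^sub>E {1..k}"
        by (auto simp: cset_def)
      have dV: "d \<in> V \<rightarrow>\<^sub>E {1..k}" using cV V by (auto simp: d h_def PiE_iff extensional_def)
      have df: "a \<in> V \<Longrightarrow> d a = c' (f a)" for a by (auto simp: d h_def f_def)
      have "\<forall>(a, b) \<in> insert (u, w) A. d a = d b"
      proof (clarify)
        fix a b assume ab: "(a, b) \<in> insert (u, w) A"
        show "d a = d b"
        proof (cases "(a, b) = (u, w)")
          case True thus ?thesis using V by (auto simp: d h_def)
        next
          case False
          hence "(a, b) \<in> A" using ab by auto
          hence "a \<in> V" "b \<in> V" "(f a, f b) \<in> ?A'" using A by auto
          thus ?thesis using df cA by auto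
        qed
      qed
      thus "d \<in> ?S" using dV by (simp add: cset_def)
    qed
  qed
  thus ?thesis by (rule bij_betw_same_card)
qed

lemma count_poly:
  assumes "finite A" "finite V" "V \<noteq> {}" "A \<subseteq> V \<times> V"
  shows "\<exists>m\<ge>1. \<forall>k. card (cset V A k) = k ^ m"
  using assms
proof (induction "card A" arbitrary: A V rule: less_induct)
  case less
  show ?case
  proof (cases "A = {}")
    case True
    have "card (cset V A k) = k ^ card V" for k
      using less.prems True by (simp add: cset_def card_PiE)
    moreover have "card V \<ge> 1" using less.prems by (simp add: Suc_le_eq card_gt_0_iff)
    ultimately show ?thesis by blast
  next
    case False
    then obtain u w where uw: "(u, w) \<in> A" by auto
    define A0 where "A0 = A - {(u, w)}"
    have AA0: "A = insert (u, w) A0" using uw A0_def by auto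
    have cA0: "card A0 < card A" using uw less.prems(1) A0_def by (metis card_Diff1_less)
    have A0V: "A0 \<subseteq> V \<times> V" using less.prems A0_def by auto
    have uwV: "u \<in> V" "w \<in> V" using uw less.prems by auto
    show ?thesis
    proof (cases "u = w")
      case True
      have "cset V A k = cset V A0 k" for k using True AA0 by (auto simp: cset_def)
      moreover obtain m where "m \<ge> 1" "\<forall>k. card (cset V A0 k) = k ^ m"
        using less.hyps[OF cA0] less.prems A0V A0_def by blast
      ultimately show ?thesis by auto
    next
      case False
      define f where "f = id(w := u)"
      define A' where "A' = (\<lambda>(a, b). (f a, f b)) ` A0"
      have "card A' \<le> card A0" unfolding A'_def using less.prems(1) A0_def by (simp add: card_image_le)
      hence cA': "card A' < card A" using cA0 by simp
      have A'V: "A' \<subseteq> (V - {w}) \<times> (V - {w})" using A0V uwV False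
        by (auto simp: A'_def f_def split: if_splits)
      obtain m where "m \<ge> 1" "\<forall>k. card (cset (V - {w}) A' k) = k ^ m"
        using less.hyps[OF cA' _ _ _ A'V] less.prems uwV False A'_def A0_def by blast
      moreover have "card (cset V A k) = card (cset (V - {w}) A' k)" for k
        unfolding AA0 A'_def f_def by (rule count_step[OF uwV False A0V])
      ultimately show ?thesis by auto
    qed
  qed
qed


lemma FK:
  fixes V :: "'v set" and E :: "'e set" and ends :: "'e \<Rightarrow> 'v \<times> 'v"
  assumes "finite E" "finite V"
  shows "potts_eval V E ends k v =
    (\<Sum>B\<in>Pow E. (v - 1) ^ card B * of_nat (card (cset V (ends ` B) k)))"
proof -
  define C where "C = V \<rightarrow>\<^sub>E {1..k}"
  define P where "P c e \<longleftrightarrow> c (fst (ends e)) = c (snd (ends e))" for c :: "'v \<Rightarrow> nat" and e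
  have finC: "finite C" unfolding C_def using assms(2) by (simp add: finite_PiE)
  have step: "v ^ card {e \<in> E. P c e} =
      (\<Sum>B\<in>Pow E. if (\<forall>e\<in>B. P c e) then (v - 1) ^ card B else 0)" for c
  proof -
    have "v ^ card {e \<in> E. P c e} = (\<Prod>e\<in>{e \<in> E. P c e}. v)" by simp
    also have "\<dots> = (\<Prod>e\<in>E. if P c e then v else 1)" using assms(1) by (rule prod.inter_filter)
    also have "\<dots> = (\<Prod>e\<in>E. (if P c e then v - 1 else 0) + 1)" by (rule prod.cong) auto
    also have "\<dots> = (\<Sum>B\<in>Pow E. (\<Prod>e\<in>B. if P c e then v - 1 else 0) * (\<Prod>e\<in>E - B. 1))"
      using assms(1) by (rule prod_add)
    also have "\<dots> = (\<Sum>B\<in>Pow E. if (\<forall>e\<in>B. P c e) then (v - 1) ^ card B else 0)"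
    proof (rule sum.cong)
      fix B assume "B \<in> Pow E"
      hence fB: "finite B" using assms(1) finite_subset by auto
      show "(\<Prod>e\<in>B. if P c e then v - 1 else 0) * (\<Prod>e\<in>E - B. 1) =
            (if (\<forall>e\<in>B. P c e) then (v - 1) ^ card B else 0)"
      proof (cases "\<forall>e\<in>B. P c e")
        case True thus ?thesis by simp
      next
        case False
        then obtain e where "e \<in> B" "\<not> P c e" by auto
        thus ?thesis using fB by (auto simp: prod_zero_iff)
      qed
    qed simp
    finally show ?thesis .
  qed
  have "potts_eval V E ends k v = (\<Sum>c\<in>C. v ^ card {e \<in> E. P c e})"
    by (simp add: potts_eval_def C_def P_def)
  also have "\<dots> = (\<Sum>c\<in>C. \<Sum>B\<in>Pow E. if (\<forall>e\<in>B. P c e) then (v - 1) ^ card B else 0)"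
    using step by simp
  also have "\<dots> = (\<Sum>B\<in>Pow E. \<Sum>c\<in>C. if (\<forall>e\<in>B. P c e) then (v - 1) ^ card B else 0)"
    by (rule sum.swap)
  also have "\<dots> = (\<Sum>B\<in>Pow E. (v - 1) ^ card B * of_nat (card (cset V (ends ` B) k)))"
  proof (rule sum.cong)
    fix B assume "B \<in> Pow E"
    have eq: "{c \<in> C. \<forall>e\<in>B. P c e} = cset V (ends ` B) k"
      by (auto simp: cset_def C_def P_def split: prod.splits)
    have "(\<Sum>c\<in>C. if (\<forall>e\<in>B. P c e) then (v - 1) ^ card B else 0) =
          (\<Sum>c\<in>{c \<in> C. \<forall>e\<in>B. P c e}. (v - 1) ^ card B)"
      using finC by (rule sum.inter_filter[symmetric])
    also have "\<dots> = (v - 1) ^ card B * of_nat (card (cset V (ends ` B) k))"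
      unfolding eq by simp
    finally show "(\<Sum>c\<in>C. if (\<forall>e\<in>B. P c e) then (v - 1) ^ card B else 0) =
          (v - 1) ^ card B * of_nat (card (cset V (ends ` B) k))" .
  qed simp
  finally show ?thesis .
qed


lemma map_poly_add_hom:
  assumes "f 0 = 0" "\<And>x y. f (x + y) = f x + f y"
  shows "map_poly f (p + q) = map_poly f p + map_poly f q"
  by (intro poly_eqI) (simp add: coeff_map_poly assms)

lemma map_poly_mult_hom:
  fixes f :: "'a::comm_ring_1 \<Rightarrow> 'b::comm_ring_1"
  assumes f0: "f 0 = 0" and fa: "\<And>x y. f (x + y) = f x + f y" and fm: "\<And>x y. f (x * y) = f x * f y"
  shows "map_poly f (p * q) = map_poly f p * map_poly f q"
proof (induction p)
  case 0 then show ?case by simp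
next
  case (pCons a p)
  have "map_poly f (pCons a p * q) = map_poly f (smult a q + pCons 0 (p * q))" by simp
  also have "\<dots> = smult (f a) (map_poly f q) + pCons 0 (map_poly f p * map_poly f q)"
    by (simp add: map_poly_add_hom[OF f0 fa] map_poly_smult[OF f0 fm] map_poly_pCons[of f, OF f0] f0 pCons.IH)
  also have "\<dots> = map_poly f (pCons a p) * map_poly f q" by (simp add: map_poly_pCons[of f, OF f0])
  finally show ?case .
qed

definition ev :: "rat \<Rightarrow> rat poly poly \<Rightarrow> rat poly" where "ev a p = map_poly (\<lambda>c. poly c a) p"

lemma ev_add: "ev a (p + q) = ev a p + ev a q"
  unfolding ev_def by (rule map_poly_add_hom) auto
lemma ev_mult: "ev a (p * q) = ev a p * ev a q"
  unfolding ev_def by (rule map_poly_mult_hom) auto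
lemma ev_0: "ev a 0 = 0" by (simp add: ev_def)
lemma ev_1: "ev a 1 = 1" by (simp add: ev_def)
lemma ev_pow: "ev a (p ^ n) = ev a p ^ n"
  by (induction n) (simp_all add: ev_mult ev_1)
lemma ev_sum: "ev a (sum g A) = (\<Sum>x\<in>A. ev a (g x))"
  by (induction A rule: infinite_finite_induct) (simp_all add: ev_add ev_0)
lemma ev_const: "ev a [:c:] = [:poly c a:]"
  unfolding ev_def by (simp add: map_poly_pCons)
lemma ev_lin: "ev a [:c, d:] = [:poly c a, poly d a:]"
  unfolding ev_def by (simp add: map_poly_pCons)
lemma eval_ev: "eval_qnu p a b = poly (ev a p) b"
  by (simp add: eval_qnu_def ev_def)

lemma eval_unique:
  assumes "\<forall>k::nat. k \<ge> 1 \<longrightarrow> (\<forall>v. eval_qnu p (of_nat k) v = eval_qnu p' (of_nat k) v)"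
  shows "p = p'"
proof (rule poly_eqI)
  fix n
  define d where "d = coeff p n - coeff p' n"
  have "poly d (of_nat k) = 0" if "k \<ge> 1" for k :: nat
  proof -
    have "poly (ev (of_nat k) p) = poly (ev (of_nat k) p')"
      using assms that by (auto simp: eval_ev)
    hence "ev (of_nat k) p = ev (of_nat k) p'" by (simp add: poly_eq_poly_eq_iff)
    hence "coeff (ev (of_nat k) p) n = coeff (ev (of_nat k) p') n" by simp
    thus ?thesis by (simp add: ev_def coeff_map_poly d_def)
  qed
  hence sub: "(of_nat :: nat \<Rightarrow> rat) ` {1..} \<subseteq> {x. poly d x = 0}" by auto
  have "infinite ((of_nat :: nat \<Rightarrow> rat) ` {1..})"
  proof
    assume "finite ((of_nat :: nat \<Rightarrow> rat) ` {1..})"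
    hence "finite {1::nat..}" by (rule finite_imageD) (auto simp: inj_on_def)
    thus False using infinite_Ici[of "1::nat"] by blast
  qed
  show "coeff p n = coeff p' n"
  proof (rule ccontr)
    assume "coeff p n \<noteq> coeff p' n"
    hence "d \<noteq> 0" by (simp add: d_def)
    hence "finite {x. poly d x = 0}" by (rule poly_roots_finite)
    thus False using sub \<open>infinite _\<close> finite_subset by blast
  qed
qed


lemma potts_div:
  fixes V :: "'v set" and E :: "'e set" and ends :: "'e \<Rightarrow> 'v \<times> 'v"
  assumes fV: "finite V" and nV: "V \<noteq> {}" and fE: "finite E"
    and ends: "\<And>e. e \<in> E \<Longrightarrow> fst (ends e) \<in> V \<and> snd (ends e) \<in> V"
  shows "\<exists>r. potts_poly V E ends = [:[:0,1:]:] * r"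
proof -
  define mB where "mB B = (SOME m. m \<ge> 1 \<and> (\<forall>k. card (cset V (ends ` B) k) = k ^ m))" for B
  have mB: "mB B \<ge> 1 \<and> (\<forall>k. card (cset V (ends ` B) k) = k ^ mB B)" if "B \<in> Pow E" for B
  proof -
    have "finite B" using that fE finite_subset by auto
    moreover have "ends ` B \<subseteq> V \<times> V"
    proof
      fix x assume "x \<in> ends ` B"
      then obtain e where "e \<in> B" "x = ends e" by blast
      thus "x \<in> V \<times> V" using that ends[of e] mem_Times_iff[of x V V] by auto
    qed
    ultimately have "\<exists>m\<ge>1. \<forall>k. card (cset V (ends ` B) k) = k ^ m"
      using count_poly fV nV by blast
    thus ?thesis unfolding mB_def by (rule someI_ex)
  qed
  define r :: "rat poly poly" where "r = (\<Sum>B\<in>Pow E. [:[:-1:], [:1:]:] ^ card B * [:[:0,1:] ^ (mB B - 1):])"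
  define p0 :: "rat poly poly" where "p0 = [:[:0,1:]:] * r"
  have evp0: "eval_qnu p0 (of_nat k) v = potts_eval V E ends k v" for k v
  proof -
    let ?a = "of_nat k :: rat"
    have "eval_qnu p0 ?a v = ?a * (\<Sum>B\<in>Pow E. ?a ^ (mB B - 1) * (v - 1) ^ card B)"
      unfolding eval_ev p0_def r_def ev_mult ev_sum ev_pow ev_const ev_lin
      by (simp add: poly_sum poly_power)
    also have "\<dots> = (\<Sum>B\<in>Pow E. (v - 1) ^ card B * ?a ^ mB B)"
      unfolding sum_distrib_left
    proof (rule sum.cong)
      fix B assume "B \<in> Pow E"
      hence "1 \<le> mB B" using mB by blast
      hence "mB B = Suc (mB B - 1)" by simp
      hence "?a ^ mB B = ?a * ?a ^ (mB B - 1)" by (metis power_Suc)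
      thus "?a * (?a ^ (mB B - 1) * (v - 1) ^ card B) = (v - 1) ^ card B * ?a ^ mB B"
        by (simp only: mult_ac)
    qed simp
    also have "\<dots> = potts_eval V E ends k v"
      unfolding FK[OF fE fV]
    proof (rule sum.cong)
      fix B assume "B \<in> Pow E"
      hence "card (cset V (ends ` B) k) = k ^ mB B" using mB by blast
      thus "(v - 1) ^ card B * ?a ^ mB B = (v - 1) ^ card B * of_nat (card (cset V (ends ` B) k))"
        by simp
    qed simp
    finally show ?thesis .
  qed
  have "potts_poly V E ends = p0"
    unfolding potts_poly_def
  proof (rule the_equality)
    show "\<forall>k::nat. k \<ge> 1 \<longrightarrow> (\<forall>v. eval_qnu p0 (of_nat k) v = potts_eval V E ends k v)"
      using evp0 by simp
  next
    fix p assume "\<forall>k::nat. k \<ge> 1 \<longrightarrow> (\<forall>v. eval_qnu p (of_nat k) v = potts_eval V E ends k v)"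
    thus "p = p0" using evp0 by (intro eval_unique) simp
  qed
  thus ?thesis unfolding p0_def by blast
qed


lemma map_potts_div:
  assumes "is_quasi_tri n \<sigma> \<alpha>" "n \<ge> 1"
  shows "\<exists>r. map_potts n \<sigma> \<alpha> = [:[:0,1:]:] * r"
proof -
  have perm: "\<alpha> permutes darts n" using assms(1) by (simp add: is_quasi_tri_def is_planar_map_def)
  have fd: "finite (darts n)" by (simp add: darts_def)
  have "0 \<in> darts n" using assms(2) by (simp add: darts_def)
  hence nV: "map_vertices n \<sigma> \<noteq> {}" by (auto simp: map_vertices_def)
  show ?thesis unfolding map_potts_def
  proof (rule potts_div)
    show "finite (map_vertices n \<sigma>)" using fd by (simp add: map_vertices_def)
    show "map_vertices n \<sigma> \<noteq> {}" by (rule nV)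
    show "finite {d \<in> darts n. d < \<alpha> d}" using fd by simp
    fix e assume "e \<in> {d \<in> darts n. d < \<alpha> d}"
    hence "e \<in> darts n" "\<alpha> e \<in> darts n" using perm by (auto simp: permutes_in_image)
    thus "fst (cyc \<sigma> e, cyc \<sigma> (\<alpha> e)) \<in> map_vertices n \<sigma> \<and> snd (cyc \<sigma> e, cyc \<sigma> (\<alpha> e)) \<in> map_vertices n \<sigma>"
      by (simp add: map_vertices_def)
  qed
qed

lemma R_term:
  assumes "is_quasi_tri n \<sigma> \<alpha>" "n \<ge> 1"
  shows "R (1 / (of_nat (fact (2*n - 1)) * varq) * 2 ^ k * Fract [:map_potts n \<sigma> \<alpha>:] 1)"
proof -
  obtain r where r: "map_potts n \<sigma> \<alpha> = [:[:0,1:]:] * r" using map_potts_div[OF assms] by blast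
  have "Fract [:map_potts n \<sigma> \<alpha>:] 1 = varq * Fract [:r:] 1"
    unfolding r varq_def by (simp add: mult_ac)
  hence "1 / (of_nat (fact (2*n - 1)) * varq) * 2 ^ k * Fract [:map_potts n \<sigma> \<alpha>:] 1 =
         (1 / of_nat (fact (2*n - 1))) * (of_nat 2) ^ k * Fract [:r:] 1"
    using varq_nz by (simp add: field_simps)
  thus ?thesis by (simp only:) (intro R_mult R_pow R_of_nat R_inv_of_nat R_Fract)
qed

lemma R_monom2: "R e \<Longrightarrow> R (coeff (coeff (monom (monom e d) c) j) i)"
  by (simp add: coeff_monom R_0)

lemma Qc: "R (coeff (coeff (Q_coeff n) j) i)"
proof (cases "n = 0")
  case True
  thus ?thesis by (cases j; cases i) (simp_all add: Q_coeff_def R_0 R_1)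
next
  case False
  hence n: "n \<ge> 1" by simp
  show ?thesis
    unfolding Q_coeff_def if_not_P[OF False] coeff_sum
  proof (rule R_sum)
    fix x assume "x \<in> {(\<sigma>, \<alpha>). is_quasi_tri n \<sigma> \<alpha>}"
    then obtain \<sigma> \<alpha> where x: "x = (\<sigma>, \<alpha>)" and q: "is_quasi_tri n \<sigma> \<alpha>" by blast
    show "R (coeff (coeff (case x of (\<sigma>, \<alpha>) \<Rightarrow>
            monom (monom (1 / (of_nat (fact (2*n - 1)) * varq) * 2 ^ n_ddig n \<sigma> \<alpha>
                       * Fract [:map_potts n \<sigma> \<alpha>:] 1) (n_dig n \<sigma> \<alpha>))
              (card (root_face \<sigma> \<alpha>))) j) i)"
      unfolding x prod.case using R_term[OF q n] by (simp add: coeff_monom R_0)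
  qed
qed


definition RF :: "F fps \<Rightarrow> bool" where "RF Y \<longleftrightarrow> (\<forall>n. R (Y $ n))"

lemma RF_add: "RF A \<Longrightarrow> RF B \<Longrightarrow> RF (A + B)" by (simp add: RF_def R_add)
lemma RF_diff: "RF A \<Longrightarrow> RF B \<Longrightarrow> RF (A - B)" by (simp add: RF_def R_diff)
lemma RF_mult: "RF A \<Longrightarrow> RF B \<Longrightarrow> RF (A * B)"
  unfolding RF_def fps_mult_nth by (auto intro!: R_sum R_mult)
lemma RF_const: "R c \<Longrightarrow> RF (fps_const c)" by (simp add: RF_def R_0)
lemma RF_1: "RF 1" by (simp add: RF_def R_0 R_1)
lemma RF_0: "RF 0" by (simp add: RF_def R_0)
lemma RF_X: "RF fps_X" by (simp add: RF_def fps_X_def R_0 R_1)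
lemma RF_pow: "RF A \<Longrightarrow> RF (A ^ n)" by (induction n) (auto intro: RF_mult RF_1)
lemma RF_poly: "RF Y \<Longrightarrow> (\<And>k. R (coeff p k)) \<Longrightarrow> RF (poly (map_poly fps_const p) Y)"
proof (induction p)
  case 0 then show ?case by (simp add: RF_0)
next
  case (pCons a p)
  have "R a" using pCons.prems(2)[of 0] by simp
  moreover have "\<And>k. R (coeff p k)" using pCons.prems(2)[of "Suc _"] by simp
  ultimately show ?case using pCons by (auto simp: map_poly_pCons intro!: RF_add RF_mult RF_const)
qed
lemma RF_psubst:
  assumes "RF Y" "\<And>n k. R (coeff (A $ n) k)"
  shows "RF (psubst A Y)"
  unfolding RF_def psubst_def
  using RF_mult[OF RF_pow[OF RF_X] RF_poly[OF assms(1) assms(2)]]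
  by (auto simp: RF_def intro!: R_sum)


lemma Q0y_R: "R (coeff (Q0y $ n) k)"
  by (simp add: Q0y_def coeff_map_poly poly_0_coeff_0 Qser_def Qc)
lemma Q1x_R: "R (coeff (Q1x $ n) k)"
  by (simp add: Q1x_def Qser_def Qc)

lemma RF_G: "RF Y \<Longrightarrow> RF (G Y)"
  unfolding G_def Dd_def Q1s_def
  by (intro RF_add RF_diff RF_mult RF_pow RF_const RF_X RF_1 RF_psubst Q0y_R Q1x_R
        R_vars R_varnu R_varq R_inv_vars R_inv_nu R_1 | assumption)+

definition a0 :: F where "a0 = (varnu - 1) / vars"

lemma G_0': "G Y $ 0 = Y $ 0 - (Y $ 0)^2 * a0" using G_0 by (simp add: a0_def)

lemma G_diff': "1 \<le> m \<Longrightarrow> (\<And>i. i < m \<Longrightarrow> Y $ i = Z $ i) \<Longrightarrow>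
   G Y $ m - G Z $ m = (Y $ m - Z $ m) * (1 - 2 * Y $ 0 * a0)"
  using G_diff by (simp add: a0_def)

lemma G_unique:
  assumes "G Y = 0" "G Z = 0" "Y $ 0 = Z $ 0" "1 - 2 * Y $ 0 * a0 \<noteq> 0"
  shows "Y = Z"
proof -
  have "Y $ i = Z $ i" for i
  proof (induction i rule: less_induct)
    case (less i)
    show ?case
    proof (cases "i = 0")
      case True then show ?thesis using assms(3) by simp
    next
      case False
      hence "G Y $ i - G Z $ i = (Y $ i - Z $ i) * (1 - 2 * Y $ 0 * a0)"
        using G_diff'[of i Y Z] less by simp
      thus ?thesis using assms by simp
    qed
  qed
  thus ?thesis by (simp add: fps_eq_iff)
qed

context
  fixes c L :: F
  assumes cL: "c - c^2 * a0 = 0" "L = 1 - 2 * c * a0" "L \<noteq> 0"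
begin

fun seq :: "nat \<Rightarrow> F fps" where
  "seq 0 = fps_const c"
| "seq (Suc m) = seq m + fps_const (- (G (seq m) $ Suc m) / L) * fps_X ^ Suc m"

lemma seq_low: "i < Suc m \<Longrightarrow> seq (Suc m) $ i = seq m $ i"
  by (simp add: fps_X_power_mult_right_nth)

lemma seq_high: "m < i \<Longrightarrow> seq m $ i = 0"
proof (induction m arbitrary: i)
  case 0 then show ?case by simp
next
  case (Suc m) then show ?case by (simp add: fps_X_power_mult_right_nth)
qed

lemma seq_0: "seq m $ 0 = c"
  by (induction m) (simp_all add: fps_X_power_mult_right_nth)

lemma seq_stable: "j \<le> i \<Longrightarrow> seq i $ j = seq j $ j"
proof (induction i)
  case 0 then show ?case by simp
next
  case (Suc i)
  show ?case
  proof (cases "j = Suc i")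
    case False then show ?thesis using Suc seq_low[of j i] by simp
  qed simp
qed

lemma seq_G: "i \<le> m \<Longrightarrow> G (seq m) $ i = 0"
proof (induction m arbitrary: i)
  case 0 then show ?case using G_0'[of "fps_const c"] cL(1) by simp
next
  case (Suc m)
  show ?case
  proof (cases "i = Suc m")
    case False
    hence "i \<le> m" using Suc by simp
    have "agree m (seq (Suc m)) (seq m)" unfolding agree_def using seq_low by simp
    hence "G (seq (Suc m)) $ i = G (seq m) $ i" using agree_G \<open>i \<le> m\<close> unfolding agree_def by blast
    then show ?thesis using Suc \<open>i \<le> m\<close> by simp
  next
    case True
    have "G (seq (Suc m)) $ Suc m - G (seq m) $ Suc m =
          (seq (Suc m) $ Suc m - seq m $ Suc m) * (1 - 2 * seq (Suc m) $ 0 * a0)"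
      by (rule G_diff') (auto simp: seq_low)
    also have "seq (Suc m) $ Suc m - seq m $ Suc m = - (G (seq m) $ Suc m) / L"
      by (simp add: fps_X_power_mult_right_nth)
    also have "1 - 2 * seq (Suc m) $ 0 * a0 = L" using cL seq_0 by simp
    finally show ?thesis using True cL(3) by simp
  qed
qed

definition sol :: "F fps" where "sol = Abs_fps (\<lambda>i. seq i $ i)"

lemma sol_G: "G sol = 0"
proof -
  have "G sol $ i = 0" for i
  proof -
    have "agree i sol (seq i)" unfolding agree_def sol_def
    proof (intro allI impI)
      fix j assume "j \<le> i"
      thus "Abs_fps (\<lambda>i. seq i $ i) $ j = seq i $ j" using seq_stable[of j i] by simp
    qed
    hence "G sol $ i = G (seq i) $ i" using agree_G unfolding agree_def by blast
    thus ?thesis using seq_G by simp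
  qed
  thus ?thesis by (simp add: fps_eq_iff)
qed

lemma sol_0: "sol $ 0 = c" by (simp add: sol_def seq_0)

lemma sol_R:
  assumes "R c" "R (1 / L)"
  shows "R (sol $ n)"
proof -
  have "RF (seq m)" for m
  proof (induction m)
    case 0 then show ?case using assms by (simp add: RF_const)
  next
    case (Suc m)
    have "R (G (seq m) $ Suc m)" using RF_G[OF Suc] by (simp add: RF_def)
    hence "R (- (G (seq m) $ Suc m) / L)" using assms(2) by (rule R_divide[OF R_uminus])
    have "RF (fps_const (- (G (seq m) $ Suc m) / L) * fps_X ^ Suc m)"
      by (intro RF_mult RF_const RF_pow RF_X) fact
    then show ?case unfolding seq.simps(2) using Suc by (intro RF_add)
  qed
  thus ?thesis by (simp add: sol_def RF_def)
qed

end


lemma Dd_nz: "Dd \<noteq> 0"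
proof
  assume "Dd = 0" hence "Dd $ 0 = 0" by simp
  thus False by (simp add: Dd_def)
qed

lemma K_ts_0: "K_ts 0 \<noteq> 0"
proof
  assume "K_ts 0 = 0"
  hence "fls_nth (K_ts 0) 0 = 0" by simp
  thus False by (simp add: K_ts_def Let_def fls_times_nth power2_eq_square)
qed

lemma K_iff: "K_ts Y = 0 \<longleftrightarrow> Y \<noteq> 0 \<and> G Y = 0"
proof (cases "Y = 0")
  case True then show ?thesis using K_ts_0 by simp
next
  case False
  have e: "K_ts Y * fps_to_fls Y * fps_to_fls Dd = fps_to_fls (G Y)" by (rule K_G[OF False])
  have "fps_to_fls Y \<noteq> 0" "fps_to_fls Dd \<noteq> 0" using False Dd_nz by simp_all
  then show ?thesis using e False by (metis fps_to_fls_eq_0_iff mult_eq_0_iff)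
qed

lemma c2a0: "vars / (varnu - 1) * a0 = 1"
  using vars_nz varnu_ne1 by (simp add: a0_def)

theorem lemma7p1:
  shows "\<exists>Y1 Y2 :: F fps.
           {Y :: F fps. K_ts Y = 0} = {Y1, Y2} \<and> Y1 \<noteq> Y2 \<and>
           fps_nth Y1 0 = 0 \<and> fps_nth Y2 0 = vars / (varnu - 1) \<and>
           (\<forall>n. in_Qnu_q_s_sinv (fps_nth Y1 n)) \<and> (\<forall>n. in_Qnu_q_s_sinv (fps_nth Y2 n))"
proof -
  define c2 where "c2 = vars / (varnu - 1)"
  have c2a: "c2 * a0 = 1" unfolding c2_def by (rule c2a0)
  have h1: "0 - 0^2 * a0 = (0::F)" "(1::F) = 1 - 2 * 0 * a0" "(1::F) \<noteq> 0" by simp_all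
  have h2: "c2 - c2^2 * a0 = 0" "(-1::F) = 1 - 2 * c2 * a0" "(-1::F) \<noteq> 0"
    using c2a by (simp_all add: power2_eq_square algebra_simps)
  define Y1 where "Y1 = sol 0 1"
  define Y2 where "Y2 = sol c2 (-1)"
  have G1: "G Y1 = 0" and Y10: "Y1 $ 0 = 0" using sol_G[OF h1] sol_0[OF h1] Y1_def by simp_all
  have G2: "G Y2 = 0" and Y20: "Y2 $ 0 = c2" using sol_G[OF h2] sol_0[OF h2] Y2_def by simp_all
  have c2nz: "c2 \<noteq> 0" using c2a by auto
  have Y1nz: "Y1 \<noteq> 0"
  proof
    assume "Y1 = 0"
    hence "G 0 $ 1 = 0" using G1 by simp
    thus False by (simp add: G_def Dd_def)
  qed
  have Y2nz: "Y2 \<noteq> 0" using Y20 c2nz by auto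
  have set: "{Y. K_ts Y = 0} = {Y1, Y2}"
  proof (intro set_eqI iffI)
    fix Y assume "Y \<in> {Y. K_ts Y = 0}"
    hence Y: "Y \<noteq> 0" "G Y = 0" using K_iff by auto
    hence "Y $ 0 - (Y $ 0)^2 * a0 = 0" using G_0'[of Y] by simp
    hence "Y $ 0 * (1 - Y $ 0 * a0) = 0" by (simp add: algebra_simps power2_eq_square)
    hence "Y $ 0 = 0 \<or> Y $ 0 * a0 = 1" by auto
    hence "Y $ 0 = 0 \<or> Y $ 0 = c2"
      using c2a by (metis mult.commute mult_cancel_left2 c2nz div_by_1 nonzero_eq_divide_eq mult_cancel_right1 eq_divide_eq)
    thus "Y \<in> {Y1, Y2}"
    proof
      assume "Y $ 0 = 0" thus ?thesis using G_unique[OF Y(2) G1] Y10 by simp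
    next
      assume "Y $ 0 = c2" thus ?thesis using G_unique[OF Y(2) G2] Y20 c2a by simp
    qed
  next
    fix Y assume "Y \<in> {Y1, Y2}"
    thus "Y \<in> {Y. K_ts Y = 0}" using K_iff Y1nz Y2nz G1 G2 by auto
  qed
  have R1: "\<forall>n. R (Y1 $ n)" using sol_R[OF h1] R_0 R_1 Y1_def by simp
  have "R c2" unfolding c2_def by (rule R_divide[OF R_vars R_inv_nu1])
  hence R2: "\<forall>n. R (Y2 $ n)" using sol_R[OF h2] R_uminus[OF R_1] Y2_def by simp
  show ?thesis
    by (rule exI[of _ Y1], rule exI[of _ Y2]) (use set Y10 Y20 c2nz R1 R2 c2_def in auto)
qed


end
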